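(* Let $\psi$ and $\phi$ be Borel probability measures on $\mathbb R_+=[0,\infty)$, each with full support on $\mathbb R_+$. For every Borel measurable $\sigma:\mathbb R_+\to\mathbb R_+$ with $\sigma(w)\le w$ for all $w$, the transition kernel on $\mathbb R_+$ defined by $$P_\sigma(w,B)=\int\!\!\int \mathbb 1_B\big(\eta'(w-\sigma(w))+y'\big)\,\psi(\mathrm d\eta')\,\phi(\mathrm dy')\qquad(w\in\mathbb R_+,\ B\subset\mathbb R_+\text{ Borel})$$ is open set irreducible.
   Context: $\mathbb R_+$ carries its usual metric (open sets are relatively open subsets of $[0,\infty)$). A measure has full support on $\mathbb R_+$ if it assigns positive mass to every nonempty open subset of $\mathbb R_+$. For a transition kernel $Q$ on a metric space $\mathsf X$, $Q^n$ denotes the $n$-step kernel; a point $y$ is $Q$-reachable from $x$ if for every open neighborhood $G$ of $y$ there is $n\in\mathbb N=\{1,2,\dots\}$ with $Q^n(x,G)>0$; $Q$ is open set irreducible if every $y\in\mathsf X$ is $Q$-reachable from every $x\in\mathsf X$. *)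

theory Defs
  imports "HOL-Probability.Probability"
begin

abbreviation Rplus :: "real set" where "Rplus \<equiv> {0..}"

abbreviation borel_Rplus :: "real measure" where
  "borel_Rplus \<equiv> restrict_space borel Rplus"

definition full_support :: "real measure \<Rightarrow> real set \<Rightarrow> bool" where
  "full_support \<mu> S \<longleftrightarrow>
     (\<forall>G. openin (top_of_set S) G \<and> G \<noteq> {} \<longrightarrow> emeasure \<mu> G > 0)"

text \<open>The kernel P_sigma(w, .): law of eta' * (w - sigma w) + y' with eta' ~ psi and
  y' ~ phi independent, i.e. P_sigma(w,B) = double integral of the indicator of B.\<close>
definition P_sigma :: "real measure \<Rightarrow> real measure \<Rightarrow> (real \<Rightarrow> real) \<Rightarrow> real \<Rightarrow> real measure" where
  "P_sigma \<psi> \<phi> \<sigma> w = distr (\<psi> \<Otimes>\<^sub>M \<phi>) borel_Rplus (\<lambda>(\<eta>, y). \<eta> * (w - \<sigma> w) + y)"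

fun kernel_pow :: "(real \<Rightarrow> real measure) \<Rightarrow> nat \<Rightarrow> real \<Rightarrow> real set \<Rightarrow> ennreal" where
  "kernel_pow Q 0 x B = indicator B x"
| "kernel_pow Q (Suc n) x B = (\<integral>\<^sup>+ y. kernel_pow Q n y B \<partial>(Q x))"

definition reachable :: "(real \<Rightarrow> real measure) \<Rightarrow> real set \<Rightarrow> real \<Rightarrow> real \<Rightarrow> bool" where
  "reachable Q S x y \<longleftrightarrow>
     (\<forall>G. openin (top_of_set S) G \<and> y \<in> G \<longrightarrow> (\<exists>n\<ge>1. kernel_pow Q n x G > 0))"

definition open_set_irreducible :: "(real \<Rightarrow> real measure) \<Rightarrow> real set \<Rightarrow> bool" where
  "open_set_irreducible Q S \<longleftrightarrow> (\<forall>x\<in>S. \<forall>y\<in>S. reachable Q S x y)"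

end

theory Submission
  imports Defs
begin

theorem lemma5p1:
  fixes \<psi> \<phi> :: "real measure" and \<sigma> :: "real \<Rightarrow> real"
  assumes "prob_space \<psi>" and "sets \<psi> = sets borel_Rplus" and "space \<psi> = Rplus"
    and "prob_space \<phi>" and "sets \<phi> = sets borel_Rplus" and "space \<phi> = Rplus"
    and "full_support \<psi> Rplus" and "full_support \<phi> Rplus"
    and "\<sigma> \<in> borel_Rplus \<rightarrow>\<^sub>M borel_Rplus"
    and "\<And>w. w \<in> Rplus \<Longrightarrow> \<sigma> w \<le> w"
  shows "open_set_irreducible (P_sigma \<psi> \<phi> \<sigma>) Rplus"
  unfolding open_set_irreducible_def reachable_def
proof (intro ballI allI impI)
  fix x y :: real and G
  assume x: "x \<in> Rplus" and y: "y \<in> Rplus" and G: "openin (top_of_set Rplus) G \<and> y \<in> G"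
  define c where "c = x - \<sigma> x"
  have c0: "c \<ge> 0" using assms(10)[OF x] by (simp add: c_def)
  define f where "f = (\<lambda>(\<eta>::real, z::real). \<eta> * c + z)"
  have fP: "(\<lambda>(\<eta>, z). \<eta> * (x - \<sigma> x) + z) = f" by (simp add: f_def c_def)
  interpret psi: prob_space \<psi> by fact
  interpret phi: prob_space \<phi> by fact
  interpret pp: pair_sigma_finite \<psi> \<phi> by unfold_locales
  have idpsi: "(\<lambda>z. z) \<in> borel_measurable \<psi>"
    by (subst measurable_cong_sets[OF assms(2) refl]) (rule measurable_restrict_space1, simp)
  have idphi: "(\<lambda>z. z) \<in> borel_measurable \<phi>"
    by (subst measurable_cong_sets[OF assms(5) refl]) (rule measurable_restrict_space1, simp)
  have fb: "f \<in> borel_measurable (\<psi> \<Otimes>\<^sub>M \<phi>)"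
  proof -
    have "(\<lambda>p. fst p * c + snd p) \<in> borel_measurable (\<psi> \<Otimes>\<^sub>M \<phi>)"
      using measurable_compose[OF measurable_fst idpsi] measurable_compose[OF measurable_snd idphi]
      by (intro borel_measurable_add borel_measurable_times) (auto simp: o_def)
    moreover have "(\<lambda>p. fst p * c + snd p) = f" by (auto simp: f_def)
    ultimately show ?thesis by simp
  qed
  have sp: "space (\<psi> \<Otimes>\<^sub>M \<phi>) = Rplus \<times> Rplus"
    by (simp add: space_pair_measure assms(3,6))
  have fm: "f \<in> (\<psi> \<Otimes>\<^sub>M \<phi>) \<rightarrow>\<^sub>M borel_Rplus"
    by (rule measurable_restrict_space2[OF _ fb]) (auto simp: sp f_def c0)
  obtain U where U: "open U" "G = U \<inter> Rplus" using G by (auto simp: openin_open)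
  have Gs: "G \<in> sets borel_Rplus"
    using U by (auto simp: sets_restrict_space)
  obtain e where e: "e > 0" "ball y e \<subseteq> U" using U G open_contains_ball by blast
  define d where "d = e / (2 * (c + 1))"
  have d0: "d > 0" using e c0 by (simp add: d_def)
  define A where "A = {0..<d}"
  define B where "B = ball y (e/2) \<inter> Rplus"
  have Ao: "openin (top_of_set Rplus) A"
    unfolding openin_open A_def by (intro exI[of _ "{..<d}"]) auto
  have Bo: "openin (top_of_set Rplus) B"
    unfolding B_def openin_open by (intro exI[of _ "ball y (e/2)"]) auto
  have An: "A \<noteq> {}" using d0 by (auto simp: A_def)
  have Bn: "B \<noteq> {}" proof - have "y \<in> B" using y e by (simp add: B_def) then show ?thesis by blast qed
  have pA: "emeasure \<psi> A > 0" using assms(7) Ao An by (auto simp: full_support_def)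
  have pB: "emeasure \<phi> B > 0" using assms(8) Bo Bn by (auto simp: full_support_def)
  have As: "A \<in> sets \<psi>" using Ao by (auto simp: assms(2) sets_restrict_space openin_open)
  have Bs: "B \<in> sets \<phi>" using Bo by (auto simp: assms(5) sets_restrict_space openin_open)
  have sub: "A \<times> B \<subseteq> f -` G \<inter> space (\<psi> \<Otimes>\<^sub>M \<phi>)"
  proof
    fix p assume p: "p \<in> A \<times> B"
    then obtain a b where ab: "p = (a, b)" "0 \<le> a" "a < d" "b \<ge> 0" "dist y b < e/2"
      by (auto simp: A_def B_def)
    have "a * c \<le> d * c" using ab c0 by (simp add: mult_right_mono)
    also have "d * c < e / 2" using e c0 by (simp add: d_def field_simps)
    finally have ac: "a * c < e/2" .
    have ac0: "a * c \<ge> 0" using ab c0 by simp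
    have "dist y (a * c + b) < e" using ab(5) ac ac0 unfolding dist_real_def by linarith
    then have "a * c + b \<in> U" using e by auto
    then show "p \<in> f -` G \<inter> space (\<psi> \<Otimes>\<^sub>M \<phi>)"
      using ab ac0 U by (auto simp: f_def sp)
  qed
  have meas: "f -` G \<inter> space (\<psi> \<Otimes>\<^sub>M \<phi>) \<in> sets (\<psi> \<Otimes>\<^sub>M \<phi>)"
    using measurable_sets[OF fm Gs] .
  have "0 < emeasure \<psi> A * emeasure \<phi> B" using pA pB by (simp add: ennreal_zero_less_mult_iff)
  also have "\<dots> = emeasure (\<psi> \<Otimes>\<^sub>M \<phi>) (A \<times> B)"
    using As Bs by (simp add: phi.emeasure_pair_measure_Times)
  also have "\<dots> \<le> emeasure (\<psi> \<Otimes>\<^sub>M \<phi>) (f -` G \<inter> space (\<psi> \<Otimes>\<^sub>M \<phi>))"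
    by (rule emeasure_mono[OF sub meas])
  also have "\<dots> = emeasure (P_sigma \<psi> \<phi> \<sigma> x) G"
    unfolding P_sigma_def fP by (simp add: emeasure_distr[OF fm Gs])
  also have "\<dots> = kernel_pow (P_sigma \<psi> \<phi> \<sigma>) 1 x G"
    using Gs by (simp add: P_sigma_def)
  finally show "\<exists>n\<ge>1. kernel_pow (P_sigma \<psi> \<phi> \<sigma>) n x G > 0" by blast
qed

end
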